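(* Let $n$ be a positive integer and let $\lambda=(\lambda_1,\dots,\lambda_\ell)$ and $\mu=(\mu_1,\dots,\mu_{\ell'})$ be integer partitions of $n$ with $\mathrm{pre}_2(\lambda) = \mathrm{pre}_2(\mu)$. Then for every nonnegative integer $m$, $\sum_{i=1}^{\ell} \lambda_i^{2^m} = \sum_{i=1}^{\ell'} \mu_i^{2^m}$.
   Context: An integer partition $\lambda = (\lambda_1, \dots, \lambda_\ell)$ of a positive integer $n$ is a weakly decreasing finite sequence of positive integers whose sum is $n$; the $\lambda_i$ are its parts and $\ell(\lambda)=\ell$ is its length. For a partition $\lambda = (\lambda_1,\dots,\lambda_\ell)$, $\mathrm{pre}_2(\lambda)$ denotes the partition whose multiset of parts is the multiset $\{\!\{\lambda_i\lambda_j : 1 \le i < j \le \ell\}\!\}$ (with multiplicities, arranged in weakly decreasing order); if $\ell < 2$ it is the empty partition. *)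

theory Defs
  imports Main "HOL-Library.Multiset"
begin

definition is_partition :: "nat \<Rightarrow> nat list \<Rightarrow> bool" where
  "is_partition n lam \<longleftrightarrow> sorted_wrt (\<ge>) lam \<and> (\<forall>x\<in>set lam. 0 < x) \<and> sum_list lam = n"

text \<open>pre_2: the multiset of pairwise products lam_i * lam_j with i < j (a partition is
determined by its multiset of parts, so we compare multisets).\<close>
definition pre2 :: "nat list \<Rightarrow> nat multiset" where
  "pre2 lam = mset [lam ! i * lam ! j. (i, j) \<leftarrow> List.product [0..<length lam] [0..<length lam], i < j]"

end

theory Submission imports Defs begin

lemma sq_id:
  fixes a :: "nat \<Rightarrow> nat" and n :: nat
  shows "(\<Sum>i<n. a i)^2 = (\<Sum>i<n. (a i)^2) + 2 * (\<Sum>i<n. \<Sum>j<n. if i<j then a i * a j else 0)"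
proof (induction n)
  case 0 then show ?case by simp
next
  case (Suc n)
  have e: "(\<Sum>i<Suc n. \<Sum>j<Suc n. if i<j then a i * a j else (0::nat))
     = (\<Sum>i<n. \<Sum>j<n. if i<j then a i * a j else 0) + (\<Sum>i<n. a i * a n)"
    by (simp add: sum.distrib)
  have f: "(\<Sum>i<n. a i) * a n = (\<Sum>i<n. a i * a n)" by (simp add: sum_distrib_right)
  have "(\<Sum>i<Suc n. a i)^2 = ((\<Sum>i<n. a i) + a n)^2" by simp
  also have "\<dots> = (\<Sum>i<n. a i)^2 + 2 * ((\<Sum>i<n. a i) * a n) + (a n)^2" by (simp add: power2_sum)
  finally show ?case unfolding e f using Suc by (simp add: algebra_simps)
qed

lemma aux: "sum_list (map f (concat (map (\<lambda>(i,j). if P i j then [g i j] else []) (List.product as bs))))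
   = sum_list (map (\<lambda>a. sum_list (map (\<lambda>b. if P a b then f (g a b) else (0::'b::comm_monoid_add)) bs)) as)"
proof (induction as)
  case Nil then show ?case by simp
next
  case (Cons a as)
  have "sum_list (map f (concat (map (\<lambda>(i,j). if P i j then [g i j] else []) (map (Pair a) bs))))
     = sum_list (map (\<lambda>b. if P a b then f (g a b) else 0) bs)"
    by (induction bs) auto
  then show ?case using Cons by simp
qed

lemma pre2_sum: "sum_mset (image_mset f (pre2 xs)) = (\<Sum>i<length xs. \<Sum>j<length xs. if i<j then f (xs!i * xs!j) else 0)"
  unfolding pre2_def
  apply (simp only: mset_map[symmetric] sum_mset_sum_list aux)
  apply (simp add: interv_sum_list_conv_sum_set_nat lessThan_atLeast0)
  done

lemma key: "2 * sum_mset (image_mset (\<lambda>x. x^k) (pre2 xs)) + (\<Sum>i<length xs. (xs!i)^(2*k)) = (\<Sum>i<length xs. (xs!i)^k)^2"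
  using sq_id[where n="length xs" and a="\<lambda>i. (xs!i)^k"]
  unfolding pre2_sum by (simp only: power_even_eq power_mult_distrib)

theorem mainTheorem3:
  fixes n :: nat and lam mu :: "nat list"
  assumes "0 < n"
    and "is_partition n lam" and "is_partition n mu"
    and "pre2 lam = pre2 mu"
  shows "\<forall>m::nat. (\<Sum>i<length lam. (lam ! i) ^ (2 ^ m)) = (\<Sum>i<length mu. (mu ! i) ^ (2 ^ m))"
proof
  fix m :: nat
  show "(\<Sum>i<length lam. (lam ! i) ^ (2 ^ m)) = (\<Sum>i<length mu. (mu ! i) ^ (2 ^ m))"
  proof (induction m)
    case 0
    have "\<And>xs::nat list. (\<Sum>i<length xs. xs!i) = sum_list xs"
      by (simp add: sum_list_sum_nth lessThan_atLeast0)
    then show ?case using assms(2,3) by (simp add: is_partition_def)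
  next
    case (Suc m)
    have a: "2 * sum_mset (image_mset (\<lambda>x. x^(2^m)) (pre2 lam)) + (\<Sum>i<length lam. (lam!i)^(2*2^m)) = (\<Sum>i<length lam. (lam!i)^(2^m))^2"
      by (rule key)
    have b: "2 * sum_mset (image_mset (\<lambda>x. x^(2^m)) (pre2 mu)) + (\<Sum>i<length mu. (mu!i)^(2*2^m)) = (\<Sum>i<length mu. (mu!i)^(2^m))^2"
      by (rule key)
    from a b Suc assms(4) show ?case by simp
  qed
qed

end
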